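(* In the setting below, $(K,\mathbb{V})$ is a symmetric decomposition of the kernel $Q$ of the Unweighted Graph Sampler on $\mathcal{G}$, i.e. for every $G\in\mathcal{G}$ and $z\in\mathcal{Z}$, $\mathbb{V}_G(z)=\mathbb{V}_{G^*}(z)$ for every $G^*$ with $K_z(G,G^* )>0$; and each $K_z\in K$ is reversible with respect to the uniform distribution on $\mathcal{G}$ (indeed $K_z(G,G^* )=K_z(G^*,G)$ for all $G,G^*\in\mathcal{G}$).
   Context: Setting (unweighted graphs). $V$ is a finite vertex set; graphs are either all directed or all undirected with no multiple edges; $uv$ denotes the possible edge from $u$ to $v$ ($uv=vu$ if undirected). $G_0$ is a given graph on $V$ and $\mathcal{F}$ a given set of possible edges. $\mathcal{G}$ is the set of graphs $G$ on $V$ with the same degree sequence as $G_0$ (in- and out-degrees if directed) and $E(G)\cap\mathcal{F}=E(G_0)\cap\mathcal{F}$. $\tilde{\mathcal{F}}$ is the set of possible edges $uv$ that are present in every $G\in\mathcal{G}$ or absent from every $G\in\mathcal{G}$. $N_G(u)=\{v: vu\in E(G), vu\notin\tilde{\mathcal{F}}\}$, $M_G(u)=\{v: uv\notin E(G), uv\notin\tilde{\mathcal{F}}\}$. Unweighted Graph Sampler (one iteration from $G$): $W_{-1}=*$; $W_0\sim$ Uniform$\{v: N_G(v)\ne\emptyset\}$; $n=0$; repeat [$W_{n+1}\sim$ Uniform$(N_G(W_n)\setminus\{W_{n-1}\})$; $W_{n+2}\sim$ Uniform$(M_G(W_{n+1}))$; remove $W_{n+1}W_n$ from and add $W_{n+1}W_{n+2}$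 to the current graph; $n\leftarrow n+2$] until $W_n=W_0$; output the current graph. $Q$ denotes the Markov kernel on $\mathcal{G}$ of this procedure. The sampled sequence $W$ has the form $w_0w_1\cdots w_kw_0$ with $k$ odd; $\mathcal{W}$ is the set of such sequences. Swaps: $a_1b_1\leftrightarrow a_2b_2$ replaces edge $a_1b_1$ with $a_2b_2$; it is viable iff $a_1b_1$ is an edge, $a_2b_2$ is not, and neither lies in $\mathcal{F}$. The swaps corresponding to $w=w_0\cdots w_kw_0$ are $w_1w_0\leftrightarrow w_1w_2, w_3w_2\leftrightarrow w_3w_4,\dots,w_kw_{k-1}\leftrightarrow w_kw_0$ applied in order; they are viable iff each is viable when applied iteratively. $w^r$ denotes the reverse sequence. Kernels: two sequences in $\mathcal{W}$ are equivalent iff identical or each other's reverse; $\mathcal{Z}$ is the set of equivalence classes. For $z\in\mathcal{Z}$ with representative $w$, $K_z$ is the deterministic kernel on $\mathcal{G}$ which from $G$ performs the swaps corresponding to $w$ if viable; otherwise performs those corresponding to $w^r$ if viable; otherwise leaves $G$ unchanged (this does not depend on the representative). $K=\{K_z\}$. $\mathbb{V}_G(z)$ is the probability that the sequence $W$ sampled by the Unweighted Graph Sampler from $G$ lies in $z$ (i.e. equals $w$ or $w^r$). A decomposition $(K,\mathbb{V})$ of $Q$ means $Q(G,\cdot)=\sum_z \mathbb{V}_G(z)K_z(G,\cdot)$; it is symmetric if $\mathbb{V}_G(z)=\mathbb{V}_{G^*}(z)$ whenever $K_z(G,G^* )>0$. *)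

theory Defs
  imports "HOL-Analysis.Analysis"
begin

text \<open>Vertex set V = UNIV of a finite type 'v. The Boolean d
says whether graphs are directed; for undirected graphs the edge set is symmetric,
so uv and vu denote the same edge.\<close>

type_synonym 'v graph = "('v \<times> 'v) set"

definition is_graph :: "bool \<Rightarrow> ('v::finite) graph \<Rightarrow> bool" where
  "is_graph d E \<longleftrightarrow> (\<forall>(u,v)\<in>E. u \<noteq> v) \<and> (\<not> d \<longrightarrow> sym E)"

definition outdeg :: "('v::finite) graph \<Rightarrow> 'v \<Rightarrow> nat" where
  "outdeg E u = card {v. (u,v) \<in> E}"

definition indeg :: "('v::finite) graph \<Rightarrow> 'v \<Rightarrow> nat" where
  "indeg E u = card {v. (v,u) \<in> E}"

definition Gset :: "bool \<Rightarrow> ('v::finite) graph \<Rightarrow> 'v graph \<Rightarrow> 'v graph set" where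
  "Gset d G0 F = {G. is_graph d G \<and> (\<forall>u. outdeg G u = outdeg G0 u \<and> indeg G u = indeg G0 u)
                     \<and> G \<inter> F = G0 \<inter> F}"

definition Ftil :: "bool \<Rightarrow> ('v::finite) graph \<Rightarrow> 'v graph \<Rightarrow> ('v \<times> 'v) set" where
  "Ftil d G0 F = {(u,v). u \<noteq> v \<and> ((\<forall>G\<in>Gset d G0 F. (u,v) \<in> G) \<or> (\<forall>G\<in>Gset d G0 F. (u,v) \<notin> G))}"

definition Nset :: "bool \<Rightarrow> ('v::finite) graph \<Rightarrow> 'v graph \<Rightarrow> 'v graph \<Rightarrow> 'v \<Rightarrow> 'v set" where
  "Nset d G0 F G u = {v. (v,u) \<in> G \<and> (v,u) \<notin> Ftil d G0 F}"

definition Mset :: "bool \<Rightarrow> ('v::finite) graph \<Rightarrow> 'v graph \<Rightarrow> 'v graph \<Rightarrow> 'v \<Rightarrow> 'v set" where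
  "Mset d G0 F G u = {v. v \<noteq> u \<and> (u,v) \<notin> G \<and> (u,v) \<notin> Ftil d G0 F}"

definition ekey :: "bool \<Rightarrow> 'v \<Rightarrow> 'v \<Rightarrow> ('v \<times> 'v) set" where
  "ekey d u v = (if d then {(u,v)} else {(u,v),(v,u)})"

definition swapg :: "bool \<Rightarrow> 'v graph \<Rightarrow> 'v \<Rightarrow> 'v \<Rightarrow> 'v \<Rightarrow> 'v graph" where
  "swapg d G a x b = (G - ekey d a x) \<union> ekey d a b"

text \<open>Probability that, from graph G with previous vertex prev and current vertex x,
the remaining sampled sequence is exactly the list given (with target w0).\<close>
fun walkp :: "bool \<Rightarrow> ('v::finite) graph \<Rightarrow> 'v graph \<Rightarrow> 'v \<Rightarrow> 'v graph \<Rightarrow> 'v option \<Rightarrow> 'v \<Rightarrow> 'v list \<Rightarrow> real" where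
  "walkp d G0 F w0 G prev x (a # b # rest) =
     (let S = Nset d G0 F G x - set_option prev; M = Mset d G0 F G a in
       of_bool (a \<in> S) / real (card S) * (of_bool (b \<in> M) / real (card M)) *
       (if rest = [] then of_bool (b = w0)
        else of_bool (b \<noteq> w0) * walkp d G0 F w0 (swapg d G a x b) (Some a) b rest))"
| "walkp d G0 F w0 G prev x _ = 0"

text \<open>Probability that the Unweighted Graph Sampler run from G samples the sequence w.\<close>
definition Pw :: "bool \<Rightarrow> ('v::finite) graph \<Rightarrow> 'v graph \<Rightarrow> 'v graph \<Rightarrow> 'v list \<Rightarrow> real" where
  "Pw d G0 F G w = (case w of [] \<Rightarrow> 0
     | w0 # rest \<Rightarrow> (let St = {v. Nset d G0 F G v \<noteq> {}} in
          of_bool (w0 \<in> St) / real (card St) * walkp d G0 F w0 G None w0 rest))"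

fun apply_swaps :: "bool \<Rightarrow> 'v graph \<Rightarrow> 'v list \<Rightarrow> 'v graph" where
  "apply_swaps d G (x # a # b # rest) = apply_swaps d (swapg d G a x b) (b # rest)"
| "apply_swaps d G _ = G"

definition viable :: "('v \<times> 'v) set \<Rightarrow> 'v graph \<Rightarrow> 'v \<Rightarrow> 'v \<Rightarrow> 'v \<Rightarrow> 'v \<Rightarrow> bool" where
  "viable F G a1 b1 a2 b2 \<longleftrightarrow> (a1,b1) \<in> G \<and> (a2,b2) \<notin> G \<and> (a1,b1) \<notin> F \<and> (a2,b2) \<notin> F \<and> a2 \<noteq> b2"

fun viable_seq :: "bool \<Rightarrow> ('v \<times> 'v) set \<Rightarrow> 'v graph \<Rightarrow> 'v list \<Rightarrow> bool" where
  "viable_seq d F G (x # a # b # rest) =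
     (viable F G a x a b \<and> viable_seq d F (swapg d G a x b) (b # rest))"
| "viable_seq d F G _ = True"

definition Wset :: "'v list set" where
  "Wset = {w. length w \<ge> 3 \<and> odd (length w) \<and> hd w = last w}"

definition Zset :: "'v list set set" where
  "Zset = {{w, rev w} | w. w \<in> Wset}"

definition Kmap_w :: "bool \<Rightarrow> ('v \<times> 'v) set \<Rightarrow> 'v list \<Rightarrow> 'v graph \<Rightarrow> 'v graph" where
  "Kmap_w d F w G = (if viable_seq d F G w then apply_swaps d G w
                     else if viable_seq d F G (rev w) then apply_swaps d G (rev w) else G)"

definition Kz :: "bool \<Rightarrow> ('v \<times> 'v) set \<Rightarrow> 'v list set \<Rightarrow> 'v graph \<Rightarrow> 'v graph \<Rightarrow> real" where
  "Kz d F z G G' = of_bool (Kmap_w d F (SOME w. w \<in> z) G = G')"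

definition Vp :: "bool \<Rightarrow> ('v::finite) graph \<Rightarrow> 'v graph \<Rightarrow> 'v graph \<Rightarrow> 'v list set \<Rightarrow> real" where
  "Vp d G0 F G z = (\<Sum>w\<in>z. Pw d G0 F G w)"

definition Qk :: "bool \<Rightarrow> ('v::finite) graph \<Rightarrow> 'v graph \<Rightarrow> 'v graph \<Rightarrow> 'v graph \<Rightarrow> real" where
  "Qk d G0 F G G' = (\<Sum>\<^sub>\<infinity> w\<in>Wset. Pw d G0 F G w * of_bool (apply_swaps d G w = G'))"

end

theory Submission
  imports Defs
begin

lemma swap_graph:
  assumes "is_graph d G" "a \<noteq> b"
  shows "is_graph d (swapg d G a x b)"
proof (cases d)
  case True
  then show ?thesis using assms unfolding is_graph_def swapg_def ekey_def by auto
next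
  case False
  have s: "sym G" "\<forall>(u,v)\<in>G. u \<noteq> v" using assms False unfolding is_graph_def by auto
  have l: "\<forall>(u,v)\<in>swapg d G a x b. u \<noteq> v" using s(2) assms(2) False unfolding swapg_def ekey_def by auto
  have "sym (swapg d G a x b)"
  proof (rule symI)
    fix u v assume "(u,v) \<in> swapg d G a x b"
    then show "(v,u) \<in> swapg d G a x b" using s(1) False unfolding swapg_def ekey_def by (auto dest: symD)
  qed
  then show ?thesis using l False unfolding is_graph_def by simp
qed

lemma swap_basic:
  assumes "is_graph d G" "viable F G a x a b"
  shows "(a,x) \<in> G" "a \<noteq> b" "(a,b) \<notin> G" "a \<noteq> x" "x \<noteq> b" "(a,x) \<notin> F" "(a,b) \<notin> F"
    "\<not> d \<Longrightarrow> (x,a) \<in> G" "\<not> d \<Longrightarrow> (b,a) \<notin> G"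
  using assms unfolding viable_def is_graph_def by (auto dest: symD)

lemma swap_undo:
  assumes "is_graph d G" "viable F G a x a b"
  shows "swapg d (swapg d G a x b) a b x = G" "viable F (swapg d G a x b) a b a x"
proof -
  note ax = swap_basic[OF assms]
  show "swapg d (swapg d G a x b) a b x = G"
  proof (cases d)
    case True then show ?thesis using ax unfolding swapg_def ekey_def by auto
  next
    case False
    then show ?thesis using ax unfolding swapg_def ekey_def by auto
  qed
  show "viable F (swapg d G a x b) a b a x"
    using ax unfolding viable_def swapg_def ekey_def by auto
qed

lemma app_cons2: "apply_swaps d G (x # a # zs) = (case zs of [] \<Rightarrow> G | b # rest \<Rightarrow> apply_swaps d (swapg d G a x b) zs)"
  by (cases zs) simp_all

lemma vs_cons2: "viable_seq d F G (x # a # zs) = (case zs of [] \<Rightarrow> True | b # rest \<Rightarrow> viable F G a x a b \<and> viable_seq d F (swapg d G a x b) zs)"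
  by (cases zs) simp_all

lemma vs_snoc:
  "odd (length l) \<Longrightarrow> viable_seq d F G (l @ [a, c]) = (viable_seq d F G l \<and> viable F (apply_swaps d G l) a (last l) a c)"
proof (induction l arbitrary: G rule: induct_list012)
  case (3 x y zs)
  obtain b rest where zs: "zs = b # rest" using 3(3) by (cases zs) simp_all
  have oz: "odd (length zs)" using 3(3) by simp
  show ?case using 3(1)[OF oz, of "swapg d G y x b"] zs by simp
qed simp_all

lemma app_snoc:
  "odd (length l) \<Longrightarrow> apply_swaps d G (l @ [a, c]) = swapg d (apply_swaps d G l) a (last l) c"
proof (induction l arbitrary: G rule: induct_list012)
  case (3 x y zs)
  obtain b rest where zs: "zs = b # rest" using 3(3) by (cases zs) simp_all
  have oz: "odd (length zs)" using 3(3) by simp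
  show ?case using 3(1)[OF oz, of "swapg d G y x b"] zs by simp
qed simp_all

fun touched :: "bool \<Rightarrow> 'v list \<Rightarrow> ('v \<times> 'v) set" where
  "touched d (x # a # b # rest) = ekey d a x \<union> ekey d a b \<union> touched d (b # rest)"
| "touched d _ = {}"

lemma touched_cons2: "touched d (x # a # zs) = (case zs of [] \<Rightarrow> {} | b # rest \<Rightarrow> ekey d a x \<union> ekey d a b \<union> touched d zs)"
  by (cases zs) simp_all

lemma touched_snoc:
  "odd (length l) \<Longrightarrow> touched d (l @ [a, c]) = touched d l \<union> ekey d a (last l) \<union> ekey d a c"
proof (induction l rule: induct_list012)
  case (3 x y zs)
  obtain b rest where zs: "zs = b # rest" using 3(3) by (cases zs) simp_all
  have oz: "odd (length zs)" using 3(3) by simp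
  from 3(1)[OF oz] zs show ?case by auto
qed simp_all

lemma reversal:
  "odd (length w) \<Longrightarrow> is_graph d G \<Longrightarrow> viable_seq d F G w \<Longrightarrow>
   is_graph d (apply_swaps d G w) \<and> viable_seq d F (apply_swaps d G w) (rev w) \<and>
   apply_swaps d (apply_swaps d G w) (rev w) = G"
proof (induction w arbitrary: G rule: induct_list012)
  case (3 x y zs)
  obtain b rest where zs: "zs = b # rest" using 3(3) by (cases zs) simp_all
  have oz: "odd (length zs)" using 3(3) by simp
  have v: "viable F G y x y b" and vz: "viable_seq d F (swapg d G y x b) zs" using 3(5) zs by simp_all
  define G1 where "G1 = swapg d G y x b"
  have g1: "is_graph d G1" unfolding G1_def using swap_graph[OF 3(4)] v by (auto simp: viable_def)
  note IH = 3(1)[OF oz g1 vz[folded G1_def]]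
  define H where "H = apply_swaps d G1 zs"
  have H: "apply_swaps d G (x # y # zs) = H" unfolding H_def G1_def using zs by simp
  have r: "rev (x # y # zs) = rev zs @ [y, x]" by simp
  have orz: "odd (length (rev zs))" using oz by simp
  have lr: "last (rev zs) = b" using zs by simp
  have bk: "apply_swaps d H (rev zs) = G1" using IH H_def by simp
  have u1: "swapg d G1 y b x = G" and u2: "viable F G1 y b y x"
    using swap_undo[OF 3(4) v] unfolding G1_def by auto
  have "viable_seq d F H (rev zs @ [y, x])"
    using IH u2 unfolding vs_snoc[OF orz] lr bk H_def by simp
  moreover have "apply_swaps d H (rev zs @ [y, x]) = G"
    unfolding app_snoc[OF orz] lr bk using u1 .
  moreover have "is_graph d H" using IH H_def by simp
  ultimately show ?case unfolding H r by simp
qed simp_all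

lemma untouched:
  "p \<notin> touched d w \<Longrightarrow> (p \<in> apply_swaps d G w) = (p \<in> G)"
proof (induction w arbitrary: G rule: induct_list012)
  case (3 x y zs)
  show ?case
  proof (cases zs)
    case (Cons b rest)
    then show ?thesis using 3(1)[of "swapg d G y x b"] 3(3) by (auto simp: swapg_def)
  qed simp
qed simp_all

lemma touched_agree:
  "is_graph d G \<Longrightarrow> is_graph d G2 \<Longrightarrow> viable_seq d F G w \<Longrightarrow> viable_seq d F G2 w \<Longrightarrow>
   p \<in> touched d w \<Longrightarrow> (p \<in> G) = (p \<in> G2)"
proof (induction w arbitrary: G G2 rule: induct_list012)
  case (3 x y zs)
  obtain b rest where zs: "zs = b # rest" using 3(7) by (cases zs) auto
  have v: "viable F G y x y b" "viable F G2 y x y b"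
    and vz: "viable_seq d F (swapg d G y x b) zs" "viable_seq d F (swapg d G2 y x b) zs" using 3(5,6) zs by auto
  have g: "is_graph d (swapg d G y x b)" "is_graph d (swapg d G2 y x b)"
    using swap_graph 3(3,4) v by (auto simp: viable_def)
  show ?case
  proof (cases "p \<in> ekey d y x \<union> ekey d y b")
    case True
    note b1 = swap_basic[OF 3(3) v(1)] and b2 = swap_basic[OF 3(4) v(2)]
    show ?thesis
    proof (cases d)
      case True then show ?thesis using \<open>p \<in> ekey d y x \<union> ekey d y b\<close> b1 b2 by (auto simp: ekey_def)
    next
      case False then show ?thesis using \<open>p \<in> ekey d y x \<union> ekey d y b\<close> b1 b2 by (auto simp: ekey_def)
    qed
  next
    case False
    then have "p \<in> touched d zs" using 3(7) zs by auto
    from 3(1)[OF g vz this] False show ?thesis by (auto simp: swapg_def)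
  qed
qed simp_all

lemma touched_rev: "odd (length w) \<Longrightarrow> touched d (rev w) = touched d w"
proof (induction w rule: induct_list012)
  case (3 x y zs)
  obtain b rest where zs: "zs = b # rest" using 3(3) by (cases zs) simp_all
  have oz: "odd (length zs)" using 3(3) by simp
  have orz: "odd (length (rev zs))" using oz by simp
  have lr: "last (rev zs) = b" using zs by simp
  have "touched d (rev (x # y # zs)) = touched d (rev zs @ [y, x])" by simp
  also have "\<dots> = touched d zs \<union> ekey d y b \<union> ekey d y x"
    unfolding touched_snoc[OF orz] lr 3(1)[OF oz] ..
  also have "\<dots> = touched d (x # y # zs)" using zs by auto
  finally show ?case .
qed simp_all

lemma same_if_both:
  assumes "odd (length w)" "is_graph d G" "viable_seq d F G w" "viable_seq d F (apply_swaps d G w) w"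
  shows "apply_swaps d G w = G"
proof -
  have g: "is_graph d (apply_swaps d G w)" using reversal assms by blast
  show ?thesis
  proof (rule set_eqI)
    fix p show "(p \<in> apply_swaps d G w) = (p \<in> G)"
      using touched_agree[OF assms(2) g assms(3,4)] untouched[of p d w G] by blast
  qed
qed


lemma kmap_inv:
  assumes "odd (length w)" "is_graph d G"
  shows "Kmap_w d F w (Kmap_w d F w G) = G"
proof (cases "viable_seq d F G w")
  case True
  define H where "H = apply_swaps d G w"
  note R = reversal[OF assms True, folded H_def]
  have K: "Kmap_w d F w G = H" using True unfolding Kmap_w_def H_def by simp
  show ?thesis
  proof (cases "viable_seq d F H w")
    case True2: True
    have "H = G" using same_if_both[OF assms \<open>viable_seq d F G w\<close>] True2 unfolding H_def by simp
    then show ?thesis using K True2 unfolding Kmap_w_def by (simp add: H_def)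
  next
    case False
    then show ?thesis using K R unfolding Kmap_w_def by simp
  qed
next
  case False
  show ?thesis
  proof (cases "viable_seq d F G (rev w)")
    case True
    define H where "H = apply_swaps d G (rev w)"
    have o: "odd (length (rev w))" using assms by simp
    note R = reversal[OF o assms(2) True, folded H_def]
    have K: "Kmap_w d F w G = H" using True False unfolding Kmap_w_def H_def by simp
    then show ?thesis using R unfolding Kmap_w_def by simp
  next
    case False2: False
    then have "Kmap_w d F w G = G" using False unfolding Kmap_w_def by simp
    then show ?thesis by simp
  qed
qed

lemma kmap_viable:
  assumes "odd (length w)" "is_graph d G" "viable_seq d F G w"
  shows "Kmap_w d F w G = apply_swaps d G w" "Kmap_w d F (rev w) G = apply_swaps d G w"
proof -
  show "Kmap_w d F w G = apply_swaps d G w" using assms unfolding Kmap_w_def by simp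
  show "Kmap_w d F (rev w) G = apply_swaps d G w"
  proof (cases "viable_seq d F G (rev w)")
    case True
    define H where "H = apply_swaps d G w"
    note R = reversal[OF assms, folded H_def]
    have o: "odd (length (rev w))" using assms by simp
    have "H = G"
    proof (rule set_eqI)
      fix p show "(p \<in> H) = (p \<in> G)"
      proof (cases "p \<in> touched d w")
        case True
        then have "p \<in> touched d (rev w)" using touched_rev[OF assms(1)] by simp
        from touched_agree[OF assms(2) _ \<open>viable_seq d F G (rev w)\<close> _ this, of H] R show ?thesis by simp
      next
        case False
        then show ?thesis using untouched[OF False] unfolding H_def by simp
      qed
    qed
    then show ?thesis using True R unfolding Kmap_w_def H_def by simp
  next
    case False
    then show ?thesis using assms unfolding Kmap_w_def by simp
  qed
qed

lemma Wset_rev: "w \<in> Wset \<Longrightarrow> rev w \<in> Wset"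
  unfolding Wset_def by (simp add: hd_rev last_rev)

lemma Wset_odd: "w \<in> Wset \<Longrightarrow> odd (length w)"
  unfolding Wset_def by simp

lemma Z_rep:
  assumes "z \<in> Zset" "r \<in> z"
  shows "r \<in> Wset" "z = {r, rev r}"
proof -
  obtain w where w: "z = {w, rev w}" "w \<in> Wset" using assms(1) unfolding Zset_def by blast
  then show "r \<in> Wset" using assms(2) Wset_rev by auto
  show "z = {r, rev r}" using w assms(2) by auto
qed

lemma Z_some:
  assumes "z \<in> Zset"
  shows "(SOME w. w \<in> z) \<in> z"
proof -
  obtain w where "z = {w, rev w}" using assms unfolding Zset_def by blast
  then show ?thesis by (metis insertI1 someI_ex)
qed

lemma part3:
  assumes "z \<in> Zset" "is_graph d G" "is_graph d G'"
  shows "Kz d F z G G' = Kz d F z G' G"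
proof -
  define r where "r = (SOME w. w \<in> z)"
  have o: "odd (length r)" using Z_rep(1)[OF assms(1) Z_some[OF assms(1)]] Wset_odd unfolding r_def by blast
  have "Kmap_w d F r G = G' \<longleftrightarrow> Kmap_w d F r G' = G"
    using kmap_inv[OF o assms(2)] kmap_inv[OF o assms(3)] by metis
  then show ?thesis unfolding Kz_def r_def by simp
qed


definition stepf :: "bool \<Rightarrow> ('v::finite) graph \<Rightarrow> 'v graph \<Rightarrow> 'v graph \<Rightarrow> 'v option \<Rightarrow> 'v \<Rightarrow> 'v \<Rightarrow> 'v \<Rightarrow> real" where
  "stepf d G0 F G p x a b = (let S = Nset d G0 F G x - set_option p; M = Mset d G0 F G a in
     of_bool (a \<in> S) / real (card S) * (of_bool (b \<in> M) / real (card M)))"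

fun wp :: "bool \<Rightarrow> ('v::finite) graph \<Rightarrow> 'v graph \<Rightarrow> 'v graph \<Rightarrow> 'v option \<Rightarrow> 'v \<Rightarrow> 'v list \<Rightarrow> real" where
  "wp d G0 F G p x (a # b # rest) = stepf d G0 F G p x a b * wp d G0 F (swapg d G a x b) (Some a) b rest"
| "wp d G0 F G p x _ = 1"

fun cnd :: "'v \<Rightarrow> 'v list \<Rightarrow> bool" where
  "cnd w0 (a # b # rest) = (if rest = [] then b = w0 else b \<noteq> w0 \<and> cnd w0 rest)"
| "cnd w0 _ = False"

fun pl :: "'v option \<Rightarrow> 'v \<Rightarrow> 'v list \<Rightarrow> 'v option" where
  "pl p x (a # b # rest) = pl (Some a) b rest"
| "pl p x _ = p"

fun lst :: "'v \<Rightarrow> 'v list \<Rightarrow> 'v" where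
  "lst x (a # b # rest) = lst b rest"
| "lst x _ = x"

lemma walkp_eq: "walkp d G0 F w0 G p x l = of_bool (cnd w0 l) * wp d G0 F G p x l"
proof (induction d G0 F w0 G p x l rule: walkp.induct)
  case (1 d G0 F w0 G prev x a b rest)
  show ?case
  proof (cases "rest = []")
    case True
    then show ?thesis by (simp add: stepf_def Let_def)
  next
    case False
    note IH = 1[OF refl refl False]
    show ?thesis using False by (simp add: stepf_def Let_def IH)
  qed
qed simp_all

lemma stepf_nonneg: "stepf d G0 F G p x a b \<ge> 0"
  unfolding stepf_def Let_def by simp

lemma wp_nonneg: "wp d G0 F G p x l \<ge> 0"
  by (induction d G0 F G p x l rule: wp.induct) (simp_all add: stepf_nonneg)

lemma walkp_nonneg: "walkp d G0 F w0 G p x l \<ge> 0"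
  by (simp add: walkp_eq wp_nonneg)

lemma Pw_nonneg: "Pw d G0 F G w \<ge> 0"
  unfolding Pw_def by (cases w) (simp_all add: Let_def walkp_nonneg)

lemma stepf_pos:
  assumes "stepf d G0 F G p x a b > 0"
  shows "a \<in> Nset d G0 F G x - set_option p" "b \<in> Mset d G0 F G a"
proof -
  have "a \<in> Nset d G0 F G x - set_option p \<and> b \<in> Mset d G0 F G a"
  proof (rule ccontr)
    assume "\<not> ?thesis"
    then have "stepf d G0 F G p x a b = 0" unfolding stepf_def Let_def by auto
    then show False using assms by simp
  qed
  then show "a \<in> Nset d G0 F G x - set_option p" "b \<in> Mset d G0 F G a" by auto
qed

lemma stepf_val:
  assumes "a \<in> Nset d G0 F G x - set_option p" "b \<in> Mset d G0 F G a"
  shows "stepf d G0 F G p x a b = 1 / (real (card (Nset d G0 F G x - set_option p)) * real (card (Mset d G0 F G a)))"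
  using assms unfolding stepf_def Let_def by simp

lemma card_pos_mem: "(a::'v::finite) \<in> A \<Longrightarrow> card A > 0"
  using card_gt_0_iff finite by blast

lemma wp_cons_pos:
  assumes "wp d G0 F G p x (a # b # rest) > 0"
  shows "stepf d G0 F G p x a b > 0" "wp d G0 F (swapg d G a x b) (Some a) b rest > 0"
proof -
  have "stepf d G0 F G p x a b * wp d G0 F (swapg d G a x b) (Some a) b rest > 0" using assms by simp
  then show "stepf d G0 F G p x a b > 0" "wp d G0 F (swapg d G a x b) (Some a) b rest > 0"
    using stepf_nonneg[of d G0 F G p x a b] wp_nonneg[of d G0 F "swapg d G a x b" "Some a" b rest]
    by (simp_all add: zero_less_mult_iff)
qed

lemma F_sub:
  assumes "\<forall>(u,v)\<in>F. u \<noteq> v"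
  shows "F \<subseteq> Ftil d G0 F"
proof
  fix p assume p: "p \<in> F"
  obtain u v where uv: "p = (u,v)" by (cases p)
  have "u \<noteq> v" using assms p uv by auto
  have "\<forall>G\<in>Gset d G0 F. ((u,v) \<in> G) = ((u,v) \<in> G0)" using p uv unfolding Gset_def by blast
  then show "p \<in> Ftil d G0 F" using \<open>u \<noteq> v\<close> uv unfolding Ftil_def by (cases "(u,v) \<in> G0") auto
qed

lemma Ftil_sym:
  assumes "\<not> d" "(u,v) \<in> Ftil d G0 F"
  shows "(v,u) \<in> Ftil d G0 F"
proof -
  have s: "\<And>G. G \<in> Gset d G0 F \<Longrightarrow> ((u,v) \<in> G) = ((v,u) \<in> G)"
    using assms(1) unfolding Gset_def is_graph_def by (auto dest: symD)
  show ?thesis using assms(2) s unfolding Ftil_def by auto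
qed

lemma wp_pos_vs:
  "F \<subseteq> Ftil d G0 F \<Longrightarrow> wp d G0 F G p x l > 0 \<Longrightarrow> viable_seq d F G (x # l)"
proof (induction d G0 F G p x l rule: wp.induct)
  case (1 d G0 F G p x a b rest)
  note P = wp_cons_pos[OF 1(3)]
  note S = stepf_pos[OF P(1)]
  have "viable F G a x a b" using S 1(2) unfolding viable_def Nset_def Mset_def by auto
  moreover have "viable_seq d F (swapg d G a x b) (b # rest)" using 1(1)[OF 1(2) P(2)] .
  ultimately show ?case by simp
qed simp_all


lemma mem_swap: "((u,v) \<in> swapg d G a x b) = (((u,v) \<in> G \<and> (u,v) \<notin> ekey d a x) \<or> (u,v) \<in> ekey d a b)"
  unfolding swapg_def by auto

lemma pos_facts:
  assumes "is_graph d G" "a \<in> Nset d G0 F G x" "b \<in> Mset d G0 F G a"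
  shows "(a,x) \<in> G" "(a,x) \<notin> Ftil d G0 F" "a \<noteq> x" "a \<noteq> b" "(a,b) \<notin> G" "(a,b) \<notin> Ftil d G0 F" "x \<noteq> b"
proof -
  show ax: "(a,x) \<in> G" "(a,x) \<notin> Ftil d G0 F" using assms(2) unfolding Nset_def by auto
  show "a \<noteq> x" using ax(1) assms(1) unfolding is_graph_def by auto
  show ab: "a \<noteq> b" "(a,b) \<notin> G" "(a,b) \<notin> Ftil d G0 F" using assms(3) unfolding Mset_def by auto
  show "x \<noteq> b" using ax(1) ab(2) by auto
qed

lemma M_swap:
  assumes "is_graph d G" "a \<in> Nset d G0 F G x" "b \<in> Mset d G0 F G a"
  shows "x \<in> Mset d G0 F (swapg d G a x b) a" "card (Mset d G0 F (swapg d G a x b) a) = card (Mset d G0 F G a)"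
proof -
  note f = pos_facts[OF assms]
  have key: "\<And>v. ((a,v) \<in> swapg d G a x b) = (((a,v) \<in> G \<and> v \<noteq> x) \<or> v = b)"
    using f(3,4) unfolding mem_swap ekey_def by auto
  have eq: "Mset d G0 F (swapg d G a x b) a = insert x (Mset d G0 F G a - {b})"
    using f unfolding Mset_def key by auto
  have xn: "x \<notin> Mset d G0 F G a" using f(1) unfolding Mset_def by auto
  show "x \<in> Mset d G0 F (swapg d G a x b) a" using eq by simp
  have "card (insert x (Mset d G0 F G a - {b})) = card (Mset d G0 F G a - {b}) + 1"
    using xn by (simp add: card_insert_if)
  also have "\<dots> = card (Mset d G0 F G a)"
    using assms(3) card_pos_mem[OF assms(3)] by (simp add: card_Diff_singleton)
  finally show "card (Mset d G0 F (swapg d G a x b) a) = card (Mset d G0 F G a)" using eq by simp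
qed

lemma N_swap_card:
  assumes "is_graph d G" "a \<in> Nset d G0 F G x" "b \<in> Mset d G0 F G a"
    and fs: "\<not> d \<Longrightarrow> \<forall>u v. (u,v) \<in> Ftil d G0 F \<longrightarrow> (v,u) \<in> Ftil d G0 F"
  shows "card (Nset d G0 F (swapg d G a x b) u) + (if u = x then 1 else 0) = card (Nset d G0 F G u) + (if u = b then 1 else 0)"
proof -
  note f = pos_facts[OF assms(1-3)]
  let ?N1 = "Nset d G0 F (swapg d G a x b)" and ?N = "Nset d G0 F G"
  show ?thesis
  proof (cases "u = x")
    case True
    have eq: "?N1 u = ?N u - {a}" using True f unfolding Nset_def mem_swap ekey_def by auto
    have "a \<in> ?N u" using True assms(2) by simp
    then have "card (?N1 u) + 1 = card (?N u)" unfolding eq using card_pos_mem[of a "?N u"]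
      by (simp add: card_Diff_singleton)
    then show ?thesis using True f by simp
  next
    case ux: False
    show ?thesis
    proof (cases "u = b")
      case True
      have eq: "?N1 u = insert a (?N u)" using True f unfolding Nset_def mem_swap ekey_def by auto
      have "a \<notin> ?N u" using True f unfolding Nset_def by auto
      then have "card (?N1 u) = card (?N u) + 1" unfolding eq by (simp add: card_insert_if)
      then show ?thesis using True ux by simp
    next
      case ub: False
      show ?thesis
      proof (cases "u = a \<and> \<not> d")
        case True
        then have nd: "\<not> d" and ua: "u = a" by auto
        have sG: "sym G" using assms(1) nd unfolding is_graph_def by simp
        have xa: "(x,a) \<in> G" using f(1) sG by (auto dest: symD)
        have ba: "(b,a) \<notin> G" using f(5) sG by (auto dest: symD)
        have xaF: "(x,a) \<notin> Ftil d G0 F" using f(2) fs nd by blast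
        have baF: "(b,a) \<notin> Ftil d G0 F" using f(6) fs nd by blast
        have eq: "?N1 u = insert b (?N u - {x})"
          using ua nd f xa ba xaF baF unfolding Nset_def mem_swap ekey_def by auto
        have xin: "x \<in> ?N u" using ua xa xaF unfolding Nset_def by simp
        have bn: "b \<notin> ?N u" using ua ba unfolding Nset_def by simp
        have "card (?N1 u) = card (?N u - {x}) + 1" unfolding eq using bn by (simp add: card_insert_if)
        also have "\<dots> = card (?N u)" using xin card_pos_mem[OF xin] by (simp add: card_Diff_singleton)
        finally show ?thesis using ux ub by simp
      next
        case False
        have eq: "?N1 u = ?N u"
        proof (cases d)
          case True then show ?thesis using ux ub f unfolding Nset_def mem_swap ekey_def by auto
        next
          case nd: False
          then have "u \<noteq> a" using False by simp
          then show ?thesis using ux ub f nd unfolding Nset_def mem_swap ekey_def by auto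
        qed
        then show ?thesis using ux ub by simp
      qed
    qed
  qed
qed

lemma N_tele:
  "F \<subseteq> Ftil d G0 F \<Longrightarrow> (\<not> d \<Longrightarrow> \<forall>u v. (u,v) \<in> Ftil d G0 F \<longrightarrow> (v,u) \<in> Ftil d G0 F) \<Longrightarrow>
   is_graph d G \<Longrightarrow> wp d G0 F G p x l > 0 \<Longrightarrow>
   card (Nset d G0 F (apply_swaps d G (x # l)) u) + (if u = x then 1 else 0) = card (Nset d G0 F G u) + (if u = lst x l then 1 else 0)"
proof (induction d G0 F G p x l rule: wp.induct)
  case (1 d G0 F G p x a b rest)
  note P = wp_cons_pos[OF 1(5)]
  note S = stepf_pos[OF P(1)]
  have aN: "a \<in> Nset d G0 F G x" using S(1) by simp
  have g1: "is_graph d (swapg d G a x b)" using swap_graph[OF 1(4)] pos_facts[OF 1(4) aN S(2)] by simp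
  have st: "card (Nset d G0 F (swapg d G a x b) u) + (if u = x then 1 else 0) = card (Nset d G0 F G u) + (if u = b then 1 else 0)"
    using N_swap_card[OF 1(4) aN S(2) 1(3)] by simp
  have ih: "card (Nset d G0 F (apply_swaps d (swapg d G a x b) (b # rest)) u) + (if u = b then 1 else 0) = card (Nset d G0 F (swapg d G a x b) u) + (if u = lst b rest then 1 else 0)"
    using 1(1)[OF 1(2) 1(3) g1 P(2)] .
  show ?case using st ih by simp
qed simp_all

lemma wp_snoc:
  "even (length l) \<Longrightarrow> wp d G0 F G p x (l @ [a0, c0]) = wp d G0 F G p x l * stepf d G0 F (apply_swaps d G (x # l)) (pl p x l) (lst x l) a0 c0"
proof (induction d G0 F G p x l rule: wp.induct)
  case (1 d G0 F G p x a b rest)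
  have "even (length rest)" using 1(2) by simp
  from 1(1)[OF this] show ?case by simp
qed simp_all

lemma pl_snoc: "even (length l) \<Longrightarrow> pl p x (l @ [a0, c0]) = Some a0"
  by (induction p x l rule: pl.induct) simp_all

lemma lst_last: "even (length l) \<Longrightarrow> lst x l = last (x # l)"
  by (induction x l rule: lst.induct) simp_all


lemma aux1: "(cs::real) \<noteq> 0 \<Longrightarrow> 1 / (cs * cm) * A * cs = A / cm"
  by (cases "cm = 0") (simp_all add: field_simps)

lemma aux2: "(n::real) \<noteq> 0 \<Longrightarrow> 1 / (n * m) * n = 1 / m"
  by (cases "m = 0") (simp_all add: field_simps)

lemma aux3: "(t::real) \<noteq> 0 \<Longrightarrow> A * t * (1 / (t * m)) = A / m"
  by (cases "m = 0") (simp_all add: field_simps)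

lemma GL:
  "F \<subseteq> Ftil d G0 F \<Longrightarrow> is_graph d G \<Longrightarrow> wp d G0 F G p x t > 0 \<Longrightarrow> t \<noteq> [] \<Longrightarrow> even (length t) \<Longrightarrow>
   wp d G0 F G p x t * real (card (Nset d G0 F G x - set_option p)) =
   wp d G0 F (apply_swaps d G (x # t)) None (last (x # t)) (tl (rev (x # t))) *
     real (card (Nset d G0 F (apply_swaps d G (x # t)) (last (x # t))))"
proof (induction d G0 F G p x t rule: wp.induct)
  case (1 d G0 F G p x a b rest)
  define G1 where "G1 = swapg d G a x b"
  define A where "A = wp d G0 F G1 (Some a) b rest"
  note P = wp_cons_pos[OF 1(4), folded G1_def]
  note S = stepf_pos[OF P(1)]
  have aN: "a \<in> Nset d G0 F G x" using S(1) by simp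
  note f = pos_facts[OF 1(3) aN S(2)]
  have g1: "is_graph d G1" unfolding G1_def using swap_graph[OF 1(3)] f by simp
  note MS = M_swap[OF 1(3) aN S(2), folded G1_def]
  have aN1: "a \<in> Nset d G0 F G1 b" using f unfolding Nset_def G1_def mem_swap ekey_def by auto
  have Spos: "card (Nset d G0 F G x - set_option p) > 0" using card_pos_mem[OF S(1)] .
  have Mpos: "card (Mset d G0 F G a) > 0" using card_pos_mem[OF S(2)] .
  have sv: "stepf d G0 F G p x a b = 1 / (real (card (Nset d G0 F G x - set_option p)) * real (card (Mset d G0 F G a)))"
    using stepf_val[OF S] .
  have LHS: "wp d G0 F G p x (a # b # rest) * real (card (Nset d G0 F G x - set_option p)) = A / real (card (Mset d G0 F G a))"
  proof -
    have e: "wp d G0 F G p x (a # b # rest) = stepf d G0 F G p x a b * A" unfolding A_def G1_def by simp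
    have r1: "real (card (Nset d G0 F G x - set_option p)) > 0" "real (card (Mset d G0 F G a)) > 0" using Spos Mpos by simp_all
    show ?thesis unfolding e sv using r1(1) by (intro aux1) linarith
  qed
  show ?case
  proof (cases "rest = []")
    case True
    have A1: "A = 1" unfolding A_def True by simp
    have sv1: "stepf d G0 F G1 None b a x = 1 / (real (card (Nset d G0 F G1 b)) * real (card (Mset d G0 F G1 a)))"
      using stepf_val[of a d G0 F G1 b None x] aN1 MS(1) by simp
    have Npos: "card (Nset d G0 F G1 b) > 0" using card_pos_mem[OF aN1] .
    have W: "wp d G0 F (apply_swaps d G (x # a # b # rest)) None (last (x # a # b # rest)) (tl (rev (x # a # b # rest))) *
      real (card (Nset d G0 F (apply_swaps d G (x # a # b # rest)) (last (x # a # b # rest))))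
      = stepf d G0 F G1 None b a x * real (card (Nset d G0 F G1 b))"
      using True unfolding G1_def by simp
    have Npr: "real (card (Nset d G0 F G1 b)) > 0" using Npos by simp
    have "stepf d G0 F G1 None b a x * real (card (Nset d G0 F G1 b)) = 1 / real (card (Mset d G0 F G1 a))"
      unfolding sv1 using Npr by (intro aux2) linarith
    also have "\<dots> = 1 / real (card (Mset d G0 F G a))" using MS(2) by simp
    finally have "stepf d G0 F G1 None b a x * real (card (Nset d G0 F G1 b)) = 1 / real (card (Mset d G0 F G a))" .
    then show ?thesis using W LHS A1 by simp
  next
    case False
    then obtain c rest' where rc: "rest = c # rest'" by (cases rest) auto
    have er: "even (length rest)" using 1(6) by simp
    have Apos: "A > 0" using P(2) unfolding A_def .
    obtain e rest'' where rc2: "rest' = e # rest''" using er rc by (cases rest') auto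
    note P2 = wp_cons_pos[OF Apos[unfolded A_def rc rc2]]
    have cN: "c \<in> Nset d G0 F G1 b - {a}" using stepf_pos(1)[OF P2(1)] by simp
    define H where "H = apply_swaps d G1 (b # rest)"
    have IH: "A * real (card (Nset d G0 F G1 b - {a})) =
        wp d G0 F H None (last (b # rest)) (tl (rev (b # rest))) * real (card (Nset d G0 F H (last (b # rest))))"
      using 1(1)[OF 1(2) g1[unfolded G1_def] P(2)[unfolded G1_def] False er] unfolding A_def H_def G1_def by simp
    define r where "r = rev (b # rest)"
    have ob: "odd (length (b # rest))" using er by simp
    have vs1: "viable_seq d F G1 (b # rest)"
      using wp_pos_vs[OF 1(2) 1(4)] unfolding G1_def by simp
    have back1: "apply_swaps d H r = G1" using reversal[OF ob g1 vs1] unfolding H_def r_def by simp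
    have rne: "r \<noteq> []" unfolding r_def by simp
    have hdr: "hd r = last (b # rest)" unfolding r_def by (simp add: hd_rev)
    have etr: "even (length (tl r))" using er unfolding r_def by simp
    have lstr: "lst (hd r) (tl r) = b"
      using lst_last[OF etr, of "hd r"] rne unfolding r_def by (simp add: last_rev)
    have r2: "r = rev rest' @ [c, b]" unfolding r_def rc by simp
    have orr: "odd (length rest')" using er rc by simp
    then obtain y ys where yys: "rev rest' = y # ys" by (cases "rev rest'") auto
    have eys: "even (length ys)" using orr yys by (metis length_Cons length_rev even_Suc)
    have plr: "pl None (hd r) (tl r) = Some c" using pl_snoc[OF eys] unfolding r2 yys by simp
    have trev: "tl (rev (x # a # b # rest)) = tl r @ [a, x]"
    proof -
      have "rev (x # a # b # rest) = r @ [a, x]" unfolding r_def by simp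
      then show ?thesis using rne by (simp add: tl_append2)
    qed
    have acs: "a \<in> Nset d G0 F G1 b - {c}" using aN1 cN by auto
    have sv2: "stepf d G0 F G1 (Some c) b a x = 1 / (real (card (Nset d G0 F G1 b - {c})) * real (card (Mset d G0 F G1 a)))"
      using stepf_val[of a d G0 F G1 b "Some c" x] acs MS(1) by simp
    have Tpos: "card (Nset d G0 F G1 b - {a}) > 0" using card_pos_mem[OF cN] .
    have Teq: "card (Nset d G0 F G1 b - {c}) = card (Nset d G0 F G1 b - {a})"
      using cN aN1 by (simp add: card_Diff_singleton)
    have "wp d G0 F (apply_swaps d G (x # a # b # rest)) None (last (x # a # b # rest)) (tl (rev (x # a # b # rest))) *
      real (card (Nset d G0 F (apply_swaps d G (x # a # b # rest)) (last (x # a # b # rest))))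
      = wp d G0 F H None (hd r) (tl r @ [a, x]) * real (card (Nset d G0 F H (last (b # rest))))"
      unfolding trev hdr H_def G1_def by simp
    also have "\<dots> = wp d G0 F H None (hd r) (tl r) * stepf d G0 F G1 (Some c) b a x * real (card (Nset d G0 F H (last (b # rest))))"
      using wp_snoc[OF etr, of d G0 F H None "hd r" a x] rne back1 lstr plr by simp
    also have "\<dots> = (wp d G0 F H None (last (b # rest)) (tl (rev (b # rest))) * real (card (Nset d G0 F H (last (b # rest))))) * stepf d G0 F G1 (Some c) b a x"
      unfolding hdr unfolding r_def by (simp only: mult_ac)
    also have "\<dots> = A * real (card (Nset d G0 F G1 b - {a})) * stepf d G0 F G1 (Some c) b a x"
      unfolding IH ..
    also have "\<dots> = A / real (card (Mset d G0 F G a))"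
    proof -
      have "real (card (Nset d G0 F G1 b - {a})) > 0" using Tpos by simp
      then show ?thesis unfolding sv2 Teq MS(2) by (intro aux3) linarith
    qed
    finally show ?thesis using LHS by simp
  qed
qed simp_all


definition Qc :: "'v \<Rightarrow> 'v list \<Rightarrow> bool" where
  "Qc w0 v = (odd (length v) \<and> length v \<ge> 3 \<and> v ! (length v - 1) = w0 \<and>
     (\<forall>i. even i \<and> 0 < i \<and> i < length v - 1 \<longrightarrow> v ! i \<noteq> w0))"

lemma cnd_char: "cnd w0 l = Qc w0 (x # l)"
proof (induction w0 l arbitrary: x rule: cnd.induct)
  case (1 w0 a b rest)
  show ?case
  proof (cases "rest = []")
    case True
    have no: "\<forall>i. even i \<and> 0 < i \<and> i < length [x, a, b] - 1 \<longrightarrow> [x, a, b] ! i \<noteq> w0"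
    proof (intro allI impI)
      fix i assume "even i \<and> 0 < i \<and> i < length [x, a, b] - 1"
      then have "i = 1" by simp
      then show "[x, a, b] ! i \<noteq> w0" using \<open>even i \<and> 0 < i \<and> i < length [x, a, b] - 1\<close> by simp
    qed
    have "Qc w0 [x, a, b] = (b = w0)"
      unfolding Qc_def using no by simp
    then have "Qc w0 (x # a # b # rest) = (b = w0)" using True by simp
    then show ?thesis using True by simp
  next
    case False
    have IH: "cnd w0 rest = Qc w0 (b # rest)" using 1[OF False] .
    have L: "length (x # a # b # rest) = length (b # rest) + 2" by simp
    have lastq: "(x # a # b # rest) ! (length (x # a # b # rest) - 1) = (b # rest) ! (length (b # rest) - 1)"
      using False by simp
    have allq: "(\<forall>i. even i \<and> 0 < i \<and> i < length (x # a # b # rest) - 1 \<longrightarrow> (x # a # b # rest) ! i \<noteq> w0)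
       = (b \<noteq> w0 \<and> (\<forall>j. even j \<and> 0 < j \<and> j < length (b # rest) - 1 \<longrightarrow> (b # rest) ! j \<noteq> w0))"
    proof
      assume H: "\<forall>i. even i \<and> 0 < i \<and> i < length (x # a # b # rest) - 1 \<longrightarrow> (x # a # b # rest) ! i \<noteq> w0"
      have "b \<noteq> w0" using H[rule_format, of 2] False by (cases rest) auto
      moreover have "\<forall>j. even j \<and> 0 < j \<and> j < length (b # rest) - 1 \<longrightarrow> (b # rest) ! j \<noteq> w0"
      proof (intro allI impI)
        fix j assume j: "even j \<and> 0 < j \<and> j < length (b # rest) - 1"
        have "(x # a # b # rest) ! (j + 2) \<noteq> w0" using H[rule_format, of "j+2"] j by simp
        then show "(b # rest) ! j \<noteq> w0" by simp
      qed
      ultimately show "b \<noteq> w0 \<and> (\<forall>j. even j \<and> 0 < j \<and> j < length (b # rest) - 1 \<longrightarrow> (b # rest) ! j \<noteq> w0)" by simp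
    next
      assume H: "b \<noteq> w0 \<and> (\<forall>j. even j \<and> 0 < j \<and> j < length (b # rest) - 1 \<longrightarrow> (b # rest) ! j \<noteq> w0)"
      show "\<forall>i. even i \<and> 0 < i \<and> i < length (x # a # b # rest) - 1 \<longrightarrow> (x # a # b # rest) ! i \<noteq> w0"
      proof (intro allI impI)
        fix i assume i: "even i \<and> 0 < i \<and> i < length (x # a # b # rest) - 1"
        show "(x # a # b # rest) ! i \<noteq> w0"
        proof (cases "i = 2")
          case True then show ?thesis using H by simp
        next
          case False
          have i4: "i \<ge> 4" using i False by presburger
          define j where "j = i - 2"
          have ij: "i = j + 2" using i4 unfolding j_def by simp
          have "even j" using i i4 unfolding j_def by simp
          moreover have "0 < j" "j < length (b # rest) - 1" using i i4 unfolding j_def by auto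
          ultimately have "even j \<and> 0 < j \<and> j < length (b # rest) - 1" by simp
          then have "(b # rest) ! j \<noteq> w0" using H by blast
          then show ?thesis using ij by simp
        qed
      qed
    qed
    have "Qc w0 (x # a # b # rest) = (b \<noteq> w0 \<and> Qc w0 (b # rest))"
    proof -
      have e1: "Qc w0 (x # a # b # rest) = (odd (length (b # rest)) \<and> length (x # a # b # rest) \<ge> 3 \<and>
         (b # rest) ! (length (b # rest) - 1) = w0 \<and> (b \<noteq> w0 \<and> (\<forall>j. even j \<and> 0 < j \<and> j < length (b # rest) - 1 \<longrightarrow> (b # rest) ! j \<noteq> w0)))"
        unfolding Qc_def allq lastq by simp
      have l2: "length (b # rest) \<ge> 2" using False by (cases rest) auto
      have l3: "odd (length (b # rest)) \<Longrightarrow> length (b # rest) \<ge> 3" using l2 by presburger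
      have e2: "Qc w0 (b # rest) = (odd (length (b # rest)) \<and> length (b # rest) \<ge> 3 \<and>
         (b # rest) ! (length (b # rest) - 1) = w0 \<and> (\<forall>j. even j \<and> 0 < j \<and> j < length (b # rest) - 1 \<longrightarrow> (b # rest) ! j \<noteq> w0))"
        unfolding Qc_def ..
      show ?thesis unfolding e1 e2 using l3 by auto
    qed
    then show ?thesis using False IH by simp
  qed
qed (simp_all add: Qc_def)

lemma Qc_rev:
  assumes "Qc w0 v" "hd v = w0"
  shows "Qc w0 (rev v)" "hd (rev v) = w0"
proof -
  let ?n = "length v"
  have n: "odd ?n" "?n \<ge> 3" "v ! (?n - 1) = w0" and A: "\<forall>i. even i \<and> 0 < i \<and> i < ?n - 1 \<longrightarrow> v ! i \<noteq> w0"
    using assms(1) unfolding Qc_def by auto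
  have v0: "v ! 0 = w0" using assms(2) n(2) by (cases v) auto
  have vne: "v \<noteq> []" using n(2) by auto
  show "hd (rev v) = w0" using n(3) by (simp add: hd_rev last_conv_nth[OF vne])
  have r1: "rev v ! (?n - 1) = w0" using n(2) v0 by (simp add: rev_nth)
  have r2: "\<forall>i. even i \<and> 0 < i \<and> i < ?n - 1 \<longrightarrow> rev v ! i \<noteq> w0"
  proof (intro allI impI)
    fix i assume i: "even i \<and> 0 < i \<and> i < ?n - 1"
    have il: "i < ?n" using i by arith
    have e: "rev v ! i = v ! (?n - Suc i)" using rev_nth[OF il] .
    have "even (?n - Suc i) \<and> 0 < ?n - Suc i \<and> ?n - Suc i < ?n - 1" using i n(1) by auto
    then have "v ! (?n - Suc i) \<noteq> w0" using A by blast
    then show "rev v ! i \<noteq> w0" using e by simp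
  qed
  show "Qc w0 (rev v)" unfolding Qc_def using n r1 r2 by simp
qed

lemma St_eq:
  assumes "\<And>u. card (Nset d G0 F H u) = card (Nset d G0 F G u)"
  shows "{v. Nset d G0 F H v \<noteq> {}} = {v. Nset d G0 F G v \<noteq> {}}"
proof -
  have "\<And>u. (Nset d G0 F H u \<noteq> {}) = (Nset d G0 F G u \<noteq> {})"
    using assms by (metis card_0_eq finite)
  then show ?thesis by simp
qed

lemma PE:
  assumes Fs: "F \<subseteq> Ftil d G0 F" and fs: "\<not> d \<Longrightarrow> \<forall>u v. (u,v) \<in> Ftil d G0 F \<longrightarrow> (v,u) \<in> Ftil d G0 F"
    and g: "is_graph d G" and vW: "v \<in> Wset" and pos: "Pw d G0 F G v > 0"
  shows "Pw d G0 F G v = Pw d G0 F (apply_swaps d G v) (rev v)"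
proof -
  obtain w0 l where v: "v = w0 # l" using vW unfolding Wset_def by (cases v) auto
  define St where "St = {u. Nset d G0 F G u \<noteq> {}}"
  have Pv: "Pw d G0 F G v = of_bool (w0 \<in> St) / real (card St) * (of_bool (cnd w0 l) * wp d G0 F G None w0 l)"
    unfolding Pw_def v St_def by (simp add: Let_def walkp_eq)
  have w0St: "w0 \<in> St"
  proof (rule ccontr)
    assume "w0 \<notin> St" then have "Pw d G0 F G v = 0" unfolding Pv by simp
    then show False using pos by simp
  qed
  have cn: "cnd w0 l"
  proof (rule ccontr)
    assume "\<not> cnd w0 l" then have "Pw d G0 F G v = 0" unfolding Pv by simp
    then show False using pos by simp
  qed
  have wpp: "wp d G0 F G None w0 l > 0"
  proof (rule ccontr)
    assume "\<not> wp d G0 F G None w0 l > 0"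
    then have "wp d G0 F G None w0 l = 0" using wp_nonneg[of d G0 F G None w0 l] by simp
    then have "Pw d G0 F G v = 0" unfolding Pv by simp
    then show False using pos by simp
  qed
  have Q: "Qc w0 (w0 # l)" using cn cnd_char by metis
  have lne: "l \<noteq> []" and el: "even (length l)" and ll: "last (w0 # l) = w0"
    using Q unfolding Qc_def by (auto simp: last_conv_nth)
  define H where "H = apply_swaps d G (w0 # l)"
  have lst0: "lst w0 l = w0" using lst_last[OF el] ll by simp
  have cardN: "\<And>u. card (Nset d G0 F H u) = card (Nset d G0 F G u)"
    using N_tele[OF Fs fs g wpp] lst0 unfolding H_def by simp
  have StH: "{u. Nset d G0 F H u \<noteq> {}} = St" unfolding St_def by (rule St_eq[OF cardN])
  have GLi: "wp d G0 F G None w0 l * real (card (Nset d G0 F G w0)) = wp d G0 F H None w0 (tl (rev (w0 # l))) * real (card (Nset d G0 F H w0))"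
    using GL[OF Fs g wpp lne el] ll unfolding H_def by simp
  have cpos: "card (Nset d G0 F G w0) > 0" using w0St unfolding St_def by (simp add: card_gt_0_iff)
  have wpeq: "wp d G0 F G None w0 l = wp d G0 F H None w0 (tl (rev (w0 # l)))"
  proof -
    have "real (card (Nset d G0 F G w0)) > 0" using cpos by simp
    then show ?thesis using GLi cardN[of w0] by (metis mult_cancel_right less_irrefl)
  qed
  have rv: "rev v = w0 # tl (rev (w0 # l))"
  proof -
    have "hd (rev (w0 # l)) = last (w0 # l)" by (simp only: hd_rev)
    then have "hd (rev (w0 # l)) = w0" using ll by simp
    then show ?thesis unfolding v by (metis list.collapse rev_is_Nil_conv list.distinct(1))
  qed
  have Qr: "Qc w0 (rev (w0 # l))" using Qc_rev(1)[OF Q] by simp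
  have cn2: "cnd w0 (tl (rev (w0 # l)))" using Qr rv cnd_char unfolding v by metis
  have "Pw d G0 F H (rev v) = of_bool (w0 \<in> St) / real (card St) * (of_bool (cnd w0 (tl (rev (w0 # l)))) * wp d G0 F H None w0 (tl (rev (w0 # l))))"
    unfolding rv Pw_def by (simp add: Let_def walkp_eq StH)
  then show ?thesis unfolding Pv using cn cn2 wpeq H_def v by simp
qed

lemma KL:
  assumes Fs: "F \<subseteq> Ftil d G0 F" and fs: "\<not> d \<Longrightarrow> \<forall>u v. (u,v) \<in> Ftil d G0 F \<longrightarrow> (v,u) \<in> Ftil d G0 F"
    and g: "is_graph d G" and vW: "v \<in> Wset" and vs: "viable_seq d F G v"
  shows "Pw d G0 F G v = Pw d G0 F (apply_swaps d G v) (rev v)"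
proof -
  define H where "H = apply_swaps d G v"
  note R = reversal[OF Wset_odd[OF vW] g vs, folded H_def]
  show ?thesis
  proof (cases "Pw d G0 F G v > 0")
    case True then show ?thesis using PE[OF Fs fs g vW] by blast
  next
    case False
    show ?thesis
    proof (cases "Pw d G0 F H (rev v) > 0")
      case True
      have "Pw d G0 F H (rev v) = Pw d G0 F (apply_swaps d H (rev v)) (rev (rev v))"
        using PE[OF Fs fs _ Wset_rev[OF vW] True] R by blast
      then show ?thesis using R unfolding H_def by simp
    next
      case False2: False
      then show ?thesis using False Pw_nonneg[of d G0 F G v] Pw_nonneg[of d G0 F H "rev v"] unfolding H_def by linarith
    qed
  qed
qed


lemma both_vs_id:
  assumes "odd (length w)" "is_graph d G" "viable_seq d F G w" "viable_seq d F G (rev w)"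
  shows "apply_swaps d G w = G"
proof -
  define H where "H = apply_swaps d G w"
  note R = reversal[OF assms(1-3), folded H_def]
  have "H = G"
  proof (rule set_eqI)
    fix p show "(p \<in> H) = (p \<in> G)"
    proof (cases "p \<in> touched d w")
      case True
      then have "p \<in> touched d (rev w)" using touched_rev[OF assms(1)] by simp
      from touched_agree[OF assms(2) _ assms(4) _ this, of H] R show ?thesis by simp
    next
      case False
      then show ?thesis using untouched[OF False] unfolding H_def by simp
    qed
  qed
  then show ?thesis unfolding H_def .
qed

lemma Pw_pos_vs:
  assumes "F \<subseteq> Ftil d G0 F" "Pw d G0 F G w > 0"
  shows "viable_seq d F G w"
proof -
  obtain w0 l where w: "w = w0 # l" using assms(2) unfolding Pw_def by (cases w) auto
  have "walkp d G0 F w0 G None w0 l \<noteq> 0"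
  proof
    assume "walkp d G0 F w0 G None w0 l = 0"
    then have "Pw d G0 F G w = 0" unfolding Pw_def w by (simp add: Let_def)
    then show False using assms(2) by simp
  qed
  then have "wp d G0 F G None w0 l \<noteq> 0" unfolding walkp_eq by auto
  then have "wp d G0 F G None w0 l > 0" using wp_nonneg[of d G0 F G None w0 l] by linarith
  from wp_pos_vs[OF assms(1) this] show ?thesis unfolding w .
qed

lemma Gset_graph: "G \<in> Gset d G0 F \<Longrightarrow> is_graph d G"
  unfolding Gset_def by simp

lemma Ftil_sym_all: "\<not> d \<Longrightarrow> \<forall>u v. (u,v) \<in> Ftil d G0 F \<longrightarrow> (v,u) \<in> Ftil d G0 F"
  using Ftil_sym by blast

lemma part2:
  assumes Floop: "\<forall>(u,v)\<in>F. u \<noteq> v" and G: "G \<in> Gset d G0 F" and z: "z \<in> Zset" and K: "Kz d F z G G' > 0"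
  shows "Vp d G0 F G z = Vp d G0 F G' z"
proof -
  note Fs = F_sub[OF Floop, of d G0]
  note fs = Ftil_sym_all[of d G0 F]
  have g: "is_graph d G" using Gset_graph[OF G] .
  define r where "r = (SOME w. w \<in> z)"
  have rz: "r \<in> z" using Z_some[OF z] unfolding r_def .
  note RZ = Z_rep[OF z rz]
  have KG: "Kmap_w d F r G = G'" using K unfolding Kz_def r_def by (simp split: if_splits)
  show ?thesis
  proof (cases "G' = G")
    case True then show ?thesis by simp
  next
    case ne: False
    obtain v where v: "v \<in> Wset" "z = {v, rev v}" "viable_seq d F G v" "G' = apply_swaps d G v"
    proof (cases "viable_seq d F G r")
      case True
      then show ?thesis using that[of r] RZ KG unfolding Kmap_w_def by simp
    next
      case False
      show ?thesis
      proof (cases "viable_seq d F G (rev r)")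
        case True
        have "z = {rev r, rev (rev r)}" using RZ(2) by auto
        then show ?thesis using that[of "rev r"] Wset_rev[OF RZ(1)] True False KG unfolding Kmap_w_def by simp
      next
        case False2: False
        then have "G' = G" using False KG unfolding Kmap_w_def by simp
        then show ?thesis using ne by simp
      qed
    qed
    have ov: "odd (length v)" using Wset_odd[OF v(1)] .
    have e1: "Pw d G0 F G v = Pw d G0 F G' (rev v)" using KL[OF Fs fs g v(1) v(3)] v(4) by simp
    have e2: "Pw d G0 F G (rev v) = 0"
    proof (rule ccontr)
      assume "Pw d G0 F G (rev v) \<noteq> 0"
      then have "Pw d G0 F G (rev v) > 0" using Pw_nonneg[of d G0 F G "rev v"] by linarith
      then have "viable_seq d F G (rev v)" using Pw_pos_vs[OF Fs] by blast
      then have "apply_swaps d G v = G" using both_vs_id[OF ov g v(3)] by simp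
      then show False using ne v(4) by simp
    qed
    have e3: "Pw d G0 F G' v = 0"
    proof (rule ccontr)
      assume "Pw d G0 F G' v \<noteq> 0"
      then have "Pw d G0 F G' v > 0" using Pw_nonneg[of d G0 F G' v] by linarith
      then have "viable_seq d F G' v" using Pw_pos_vs[OF Fs] by blast
      then have "apply_swaps d G v = G" using same_if_both[OF ov g v(3)] v(4) by simp
      then show False using ne v(4) by simp
    qed
    show ?thesis
    proof (cases "rev v = v")
      case True
      then show ?thesis unfolding Vp_def v(2) using e1 by simp
    next
      case False
      then have "v \<noteq> rev v" by metis
      then show ?thesis unfolding Vp_def v(2) using e1 e2 e3 by simp
    qed
  qed
qed

lemma infsum_partition:
  fixes f :: "'a \<Rightarrow> real"
  assumes nn: "\<And>x. x \<in> \<Union>Z \<Longrightarrow> f x \<ge> 0" and fin: "\<And>z. z \<in> Z \<Longrightarrow> finite z"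
    and disj: "disjoint_family_on (\<lambda>z. z) Z"
  shows "infsum f (\<Union>Z) = infsum (\<lambda>z. sum f z) Z"
proof -
  have hs: "\<And>z. z \<in> Z \<Longrightarrow> (f has_sum sum f z) z" using fin by simp
  have U: "(\<Union>x\<in>Z. x) = \<Union>Z" by simp
  have iff: "f summable_on (\<Union>Z) \<longleftrightarrow> (\<lambda>z. sum f z) summable_on Z"
    using summable_on_Union_iff[of Z f "\<lambda>z. z" "\<lambda>z. sum f z", OF hs _ disj] nn unfolding U by blast
  have inj: "inj_on snd (Sigma Z (\<lambda>z. z))"
    using disj unfolding disjoint_family_on_def inj_on_def by auto
  have im: "snd ` Sigma Z (\<lambda>z. z) = \<Union>Z" by force
  show ?thesis
  proof (cases "f summable_on (\<Union>Z)")
    case True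
    have s2: "(f \<circ> snd) summable_on (Sigma Z (\<lambda>z. z))"
      using True summable_on_reindex[OF inj, of f] unfolding im by simp
    have "infsum f (\<Union>Z) = infsum (f \<circ> snd) (Sigma Z (\<lambda>z. z))"
      using infsum_reindex[OF inj, of f] unfolding im .
    also have "\<dots> = infsum (\<lambda>x. infsum (\<lambda>y. (f \<circ> snd) (x, y)) x) Z"
      using infsum_Sigma_banach[OF s2] by simp
    also have "\<dots> = infsum (\<lambda>z. sum f z) Z"
      by (rule infsum_cong) (simp add: fin)
    finally show ?thesis .
  next
    case False
    then have "\<not> (\<lambda>z. sum f z) summable_on Z" using iff by simp
    then show ?thesis using False by (simp add: infsum_not_exists)
  qed
qed

lemma Wset_Union: "Wset = \<Union>Zset"
proof
  show "Wset \<subseteq> \<Union>Zset"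
  proof
    fix w assume "w \<in> Wset"
    then have "{w, rev w} \<in> Zset" unfolding Zset_def by blast
    then show "w \<in> \<Union>Zset" by blast
  qed
  show "\<Union>Zset \<subseteq> Wset" using Z_rep(1) by blast
qed

lemma Zset_disj: "disjoint_family_on (\<lambda>z. z) Zset"
  unfolding disjoint_family_on_def
proof (intro ballI impI)
  fix z1 z2 assume z: "z1 \<in> Zset" "z2 \<in> Zset" "z1 \<noteq> z2"
  show "z1 \<inter> z2 = {}"
  proof (rule ccontr)
    assume "z1 \<inter> z2 \<noteq> {}"
    then obtain w where "w \<in> z1" "w \<in> z2" by blast
    then have "z1 = {w, rev w}" "z2 = {w, rev w}" using Z_rep(2) z by blast+
    then show False using z(3) by simp
  qed
qed

lemma Zset_fin: "z \<in> Zset \<Longrightarrow> finite z"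
  unfolding Zset_def by auto

lemma part1:
  assumes Floop: "\<forall>(u,v)\<in>F. u \<noteq> v" and G: "G \<in> Gset d G0 F"
  shows "Qk d G0 F G G' = (\<Sum>\<^sub>\<infinity> z\<in>Zset. Vp d G0 F G z * Kz d F z G G')"
proof -
  note Fs = F_sub[OF Floop, of d G0]
  have g: "is_graph d G" using Gset_graph[OF G] .
  define f where "f = (\<lambda>w. Pw d G0 F G w * of_bool (apply_swaps d G w = G'))"
  have key: "Vp d G0 F G z * Kz d F z G G' = sum f z" if z: "z \<in> Zset" for z
  proof -
    define r where "r = (SOME w. w \<in> z)"
    have rz: "r \<in> z" using Z_some[OF z] unfolding r_def .
    have "Vp d G0 F G z * Kz d F z G G' = (\<Sum>w\<in>z. Pw d G0 F G w * of_bool (Kmap_w d F r G = G'))"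
      unfolding Vp_def Kz_def r_def by (simp add: sum_distrib_right)
    also have "\<dots> = sum f z"
    proof (rule sum.cong[OF refl])
      fix w assume wz: "w \<in> z"
      show "Pw d G0 F G w * of_bool (Kmap_w d F r G = G') = f w"
      proof (cases "Pw d G0 F G w > 0")
        case True
        have vs: "viable_seq d F G w" using Pw_pos_vs[OF Fs True] .
        note RZ = Z_rep[OF z wz]
        have ow: "odd (length w)" using Wset_odd[OF RZ(1)] .
        have "r = w \<or> r = rev w" using rz RZ(2) by auto
        then have "Kmap_w d F r G = apply_swaps d G w" using kmap_viable[OF ow g vs] by auto
        then show ?thesis unfolding f_def by simp
      next
        case False
        then have "Pw d G0 F G w = 0" using Pw_nonneg[of d G0 F G w] by linarith
        then show ?thesis unfolding f_def by simp
      qed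
    qed
    finally show ?thesis .
  qed
  have nn: "\<And>x. x \<in> \<Union>Zset \<Longrightarrow> f x \<ge> 0" unfolding f_def using Pw_nonneg[of d G0 F G] by simp
  have "Qk d G0 F G G' = infsum f (\<Union>Zset)" unfolding Qk_def f_def Wset_Union ..
  also have "\<dots> = infsum (\<lambda>z. sum f z) Zset" using infsum_partition[OF nn Zset_fin Zset_disj] .
  also have "\<dots> = (\<Sum>\<^sub>\<infinity> z\<in>Zset. Vp d G0 F G z * Kz d F z G G')"
    by (rule infsum_cong) (simp add: key)
  finally show ?thesis .
qed

theorem lemma2:
  fixes d :: bool and G0 F :: "('v::finite \<times> 'v) set"
  assumes "is_graph d G0"
    and "\<forall>(u,v)\<in>F. u \<noteq> v"
    and "\<not> d \<longrightarrow> sym F"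
  shows "(\<forall>G\<in>Gset d G0 F. \<forall>G'. Qk d G0 F G G' = (\<Sum>\<^sub>\<infinity> z\<in>Zset. Vp d G0 F G z * Kz d F z G G'))
       \<and> (\<forall>G\<in>Gset d G0 F. \<forall>z\<in>Zset. \<forall>G'. Kz d F z G G' > 0 \<longrightarrow> Vp d G0 F G z = Vp d G0 F G' z)
       \<and> (\<forall>z\<in>Zset. \<forall>G\<in>Gset d G0 F. \<forall>G'\<in>Gset d G0 F. Kz d F z G G' = Kz d F z G' G)"
  using part1[OF assms(2)] part2[OF assms(2)] part3 Gset_graph by blast

end
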